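(* For every $\mathcal{ALC}$-formula $\varphi$ and every interpretation $M$, $\mathcal{C}(\varphi,M)\equiv\mathcal{C}_s(\varphi,M)$.
   Context: $\mathcal{ALC}$ concepts: $C::=A\mid\neg C\mid(C\sqcap C)\mid\exists r.C$. $\mathcal{ALC}$-formulae: $\phi::=\alpha\mid\neg\phi\mid(\phi\wedge\phi)$, atomic $\alpha::=C(a)\mid r(a,b)\mid(C=\top)$; $\neg\neg\psi$ identified with $\psi$; $\vee,\bot$ usual abbreviations. A literal is an atomic formula or its negation. Interpretations have a countable nonempty domain with standard semantics; $\equiv$ is logical equivalence (same models). $\mathrm{Sub}(\alpha)=\mathrm{Sub}(\neg\alpha)=\{\alpha,\neg\alpha\}$ for atomic $\alpha$; $\mathrm{Sub}(\psi\wedge\psi')=\mathrm{Sub}(\neg(\psi\wedge\psi'))=\{\psi\wedge\psi',\neg(\psi\wedge\psi')\}\cup\mathrm{Sub}(\psi)\cup\mathrm{Sub}(\psi')$. $\mathrm{con}(\varphi)$: smallest set of concepts containing $C$ whenever $(C=\top)$ or $C(a)$ is in $\mathrm{Sub}(\varphi)$, closed under subconcepts of $\sqcap$ and $\exists r.\cdot$ and under single negation. $\mathrm{ind}(\varphi)$: individual names in $\varphi$. Concept type for $\varphi$: $c\subseteq\mathrm{con}(\varphi)$ with $D\in c$ iff $\neg D\notin c$ and $D\sqcap E\in c$ iff $\{D,E\}\subseteq c$. Formula type for $\varphi$: $f\subseteq\mathrm{Sub}(\varphi)$ with $\psi\in f$ iff $\neg\psi\notin f$ and $\psi\wedge\psi'\in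 f$ iff $\{\psi,\psi'\}\subseteq f$ (for members of $\mathrm{Sub}(\varphi)$). Model candidate $(T,o,f)$: $T$ set of concept types, $o:\mathrm{ind}(\varphi)\to T$, $f$ formula type, $\varphi\in f$, $C(a)\in f\Rightarrow C\in o(a)$, $r(a,b)\in f\Rightarrow\{\neg C\mid\neg\exists r.C\in o(a)\}\subseteq o(b)$. Quasimodel: model candidate where each $\exists r.D\in c\in T$ has $c'\in T$ with $\{D\}\cup\{\neg E\mid\neg\exists r.E\in c\}\subseteq c'$; $\neg C\in c\in T$ implies $(C=\top)\notin f$; $\neg(C=\top)\in f$ implies some $c\in T$ with $C\notin c$; $T\neq\emptyset$. $\mathrm{ftypes}(\varphi)=\{f\mid(T,o,f)$ quasimodel for $\varphi\}$. For interpretation $I$: $\mathrm{qm}(\varphi,I)=(T,o,f)$ with $T=\{c(x)\mid x\in\Delta^I\}$, $c(x)=\{C\in\mathrm{con}(\varphi)\mid x\in C^I\}$, $o(a)=c(a^I)$, $f=\{\psi\in\mathrm{Sub}(\varphi)\mid I\models\psi\}$. $\mathrm{lit}(f)$: literals in $f$. $\mathrm{qfilter}(\varphi,M)=\mathrm{ftypes}(\varphi)\setminus\{f\}$ where $\mathrm{qm}(\varphi,M)=(T,o,f)$. $\mathcal{C}(\varphi,M)=\bigvee_{f\in\mathrm{qfilter}(\varphi,M)}\bigwedge\mathrm{lit}(f)$ if $M\models\varphi$ and $\mathrm{qfilter}(\varphi,M)\ne\emptyset$; $\bot$ if $M\models\varphi$ and $\mathrm{qfilter}(\varphi,M)=\emptyset$;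 $\varphi$ otherwise. $\mathcal{C}_s(\varphi,M)=\varphi\wedge\neg(\bigwedge\mathrm{lit}(f))$ if $M\models\varphi$, where $\mathrm{qm}(\varphi,M)=(T,o,f)$; and $\mathcal{C}_s(\varphi,M)=\varphi$ otherwise. *)

theory Defs
  imports Main "HOL-Library.Countable_Set"
begin

datatype ('c,'r) concept =
    CName 'c
  | CNeg "('c,'r) concept"
  | CAnd "('c,'r) concept" "('c,'r) concept"
  | CEx 'r "('c,'r) concept"

datatype ('c,'r,'i) atom =
    CAss "('c,'r) concept" 'i
  | RAss 'r 'i 'i
  | TopAx "('c,'r) concept"

datatype ('c,'r,'i) formula =
    Atom "('c,'r,'i) atom"
  | FNeg "('c,'r,'i) formula"
  | FAnd "('c,'r,'i) formula" "('c,'r,'i) formula"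

text \<open>Single negation, identifying double negations (neg neg psi = psi).\<close>
definition cneg :: "('c,'r) concept \<Rightarrow> ('c,'r) concept" where
  "cneg C = (case C of CNeg D \<Rightarrow> D | _ \<Rightarrow> CNeg C)"

definition fneg :: "('c,'r,'i) formula \<Rightarrow> ('c,'r,'i) formula" where
  "fneg \<psi> = (case \<psi> of FNeg \<chi> \<Rightarrow> \<chi> | _ \<Rightarrow> FNeg \<psi>)"

fun fnorm :: "('c,'r,'i) formula \<Rightarrow> ('c,'r,'i) formula" where
  "fnorm (Atom \<alpha>) = Atom \<alpha>"
| "fnorm (FNeg \<psi>) = fneg (fnorm \<psi>)"
| "fnorm (FAnd \<psi> \<chi>) = FAnd (fnorm \<psi>) (fnorm \<chi>)"

definition fbot :: "('c,'r,'i) formula" where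
  "fbot = FAnd (Atom (TopAx (CName undefined))) (FNeg (Atom (TopAx (CName undefined))))"

definition ftop :: "('c,'r,'i) formula" where
  "ftop = FNeg fbot"

definition FOr :: "('c,'r,'i) formula \<Rightarrow> ('c,'r,'i) formula \<Rightarrow> ('c,'r,'i) formula" where
  "FOr \<psi> \<chi> = FNeg (FAnd (FNeg \<psi>) (FNeg \<chi>))"

fun bigAnd_list :: "('c,'r,'i) formula list \<Rightarrow> ('c,'r,'i) formula" where
  "bigAnd_list [] = ftop"
| "bigAnd_list [\<psi>] = \<psi>"
| "bigAnd_list (\<psi> # \<psi>s) = FAnd \<psi> (bigAnd_list \<psi>s)"

fun bigOr_list :: "('c,'r,'i) formula list \<Rightarrow> ('c,'r,'i) formula" where
  "bigOr_list [] = fbot"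
| "bigOr_list [\<psi>] = \<psi>"
| "bigOr_list (\<psi> # \<psi>s) = FOr \<psi> (bigOr_list \<psi>s)"

definition bigAnd :: "('c,'r,'i) formula set \<Rightarrow> ('c,'r,'i) formula" where
  "bigAnd S = bigAnd_list (SOME xs. set xs = S \<and> distinct xs)"

definition bigOr :: "('c,'r,'i) formula set \<Rightarrow> ('c,'r,'i) formula" where
  "bigOr S = bigOr_list (SOME xs. set xs = S \<and> distinct xs)"

record ('c,'r,'i,'d) interp =
  dom :: "'d set"
  cI  :: "'c \<Rightarrow> 'd set"
  rI  :: "'r \<Rightarrow> ('d \<times> 'd) set"
  iI  :: "'i \<Rightarrow> 'd"

definition is_interp :: "('c,'r,'i,'d,'x) interp_scheme \<Rightarrow> bool" where
  "is_interp I \<longleftrightarrow> countable (dom I) \<and> dom I \<noteq> {}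
     \<and> (\<forall>A. cI I A \<subseteq> dom I) \<and> (\<forall>r. rI I r \<subseteq> dom I \<times> dom I)
     \<and> (\<forall>a. iI I a \<in> dom I)"

fun cext :: "('c,'r,'i,'d,'x) interp_scheme \<Rightarrow> ('c,'r) concept \<Rightarrow> 'd set" where
  "cext I (CName A) = cI I A"
| "cext I (CNeg C) = dom I - cext I C"
| "cext I (CAnd C D) = cext I C \<inter> cext I D"
| "cext I (CEx r C) = {x \<in> dom I. \<exists>y. (x, y) \<in> rI I r \<and> y \<in> cext I C}"

fun asat :: "('c,'r,'i,'d,'x) interp_scheme \<Rightarrow> ('c,'r,'i) atom \<Rightarrow> bool" where
  "asat I (CAss C a) \<longleftrightarrow> iI I a \<in> cext I C"
| "asat I (RAss r a b) \<longleftrightarrow> (iI I a, iI I b) \<in> rI I r"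
| "asat I (TopAx C) \<longleftrightarrow> cext I C = dom I"

fun fsat :: "('c,'r,'i,'d,'x) interp_scheme \<Rightarrow> ('c,'r,'i) formula \<Rightarrow> bool" where
  "fsat I (Atom \<alpha>) \<longleftrightarrow> asat I \<alpha>"
| "fsat I (FNeg \<psi>) \<longleftrightarrow> \<not> fsat I \<psi>"
| "fsat I (FAnd \<psi> \<chi>) \<longleftrightarrow> fsat I \<psi> \<and> fsat I \<chi>"

text \<open>Logical equivalence: same models. Every interpretation with a countable
  nonempty domain is isomorphic to one whose domain is a subset of nat.\<close>
definition fequiv :: "('c,'r,'i) formula \<Rightarrow> ('c,'r,'i) formula \<Rightarrow> bool" where
  "fequiv \<psi> \<chi> \<longleftrightarrow> (\<forall>I :: ('c,'r,'i,nat) interp. is_interp I \<longrightarrow> (fsat I \<psi> \<longleftrightarrow> fsat I \<chi>))"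

fun Sub :: "('c,'r,'i) formula \<Rightarrow> ('c,'r,'i) formula set" where
  "Sub (Atom \<alpha>) = {Atom \<alpha>, FNeg (Atom \<alpha>)}"
| "Sub (FNeg \<psi>) = Sub \<psi>"
| "Sub (FAnd \<psi> \<chi>) = {fnorm (FAnd \<psi> \<chi>), fneg (fnorm (FAnd \<psi> \<chi>))} \<union> Sub \<psi> \<union> Sub \<chi>"

inductive_set con :: "('c,'r,'i) formula \<Rightarrow> ('c,'r) concept set" for \<phi> where
  con_top: "Atom (TopAx C) \<in> Sub \<phi> \<Longrightarrow> C \<in> con \<phi>"
| con_ass: "Atom (CAss C a) \<in> Sub \<phi> \<Longrightarrow> C \<in> con \<phi>"
| con_and1: "CAnd C D \<in> con \<phi> \<Longrightarrow> C \<in> con \<phi>"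
| con_and2: "CAnd C D \<in> con \<phi> \<Longrightarrow> D \<in> con \<phi>"
| con_ex: "CEx r C \<in> con \<phi> \<Longrightarrow> C \<in> con \<phi>"
| con_negsub: "CNeg C \<in> con \<phi> \<Longrightarrow> C \<in> con \<phi>"
| con_neg: "C \<in> con \<phi> \<Longrightarrow> cneg C \<in> con \<phi>"

fun ind_atom :: "('c,'r,'i) atom \<Rightarrow> 'i set" where
  "ind_atom (CAss C a) = {a}"
| "ind_atom (RAss r a b) = {a, b}"
| "ind_atom (TopAx C) = {}"

fun ind :: "('c,'r,'i) formula \<Rightarrow> 'i set" where
  "ind (Atom \<alpha>) = ind_atom \<alpha>"
| "ind (FNeg \<psi>) = ind \<psi>"
| "ind (FAnd \<psi> \<chi>) = ind \<psi> \<union> ind \<chi>"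

definition concept_type :: "('c,'r,'i) formula \<Rightarrow> ('c,'r) concept set \<Rightarrow> bool" where
  "concept_type \<phi> c \<longleftrightarrow> c \<subseteq> con \<phi>
     \<and> (\<forall>D \<in> con \<phi>. D \<in> c \<longleftrightarrow> cneg D \<notin> c)
     \<and> (\<forall>D E. CAnd D E \<in> con \<phi> \<longrightarrow> (CAnd D E \<in> c \<longleftrightarrow> D \<in> c \<and> E \<in> c))"

definition formula_type :: "('c,'r,'i) formula \<Rightarrow> ('c,'r,'i) formula set \<Rightarrow> bool" where
  "formula_type \<phi> f \<longleftrightarrow> f \<subseteq> Sub \<phi>
     \<and> (\<forall>\<psi> \<in> Sub \<phi>. \<psi> \<in> f \<longleftrightarrow> fneg \<psi> \<notin> f)
     \<and> (\<forall>\<psi> \<chi>. FAnd \<psi> \<chi> \<in> Sub \<phi> \<longrightarrow> (FAnd \<psi> \<chi> \<in> f \<longleftrightarrow> \<psi> \<in> f \<and> \<chi> \<in> f))"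

definition model_candidate :: "('c,'r,'i) formula \<Rightarrow> ('c,'r) concept set set
     \<Rightarrow> ('i \<Rightarrow> ('c,'r) concept set) \<Rightarrow> ('c,'r,'i) formula set \<Rightarrow> bool" where
  "model_candidate \<phi> T ov f \<longleftrightarrow>
     (\<forall>c \<in> T. concept_type \<phi> c)
     \<and> (\<forall>a \<in> ind \<phi>. ov a \<in> T)
     \<and> formula_type \<phi> f
     \<and> fnorm \<phi> \<in> f
     \<and> (\<forall>C a. Atom (CAss C a) \<in> f \<longrightarrow> C \<in> ov a)
     \<and> (\<forall>r a b. Atom (RAss r a b) \<in> f \<longrightarrow>
          {cneg C | C. cneg (CEx r C) \<in> ov a} \<subseteq> ov b)"

definition quasimodel :: "('c,'r,'i) formula \<Rightarrow> ('c,'r) concept set set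
     \<Rightarrow> ('i \<Rightarrow> ('c,'r) concept set) \<Rightarrow> ('c,'r,'i) formula set \<Rightarrow> bool" where
  "quasimodel \<phi> T ov f \<longleftrightarrow>
     model_candidate \<phi> T ov f
     \<and> (\<forall>c \<in> T. \<forall>r D. CEx r D \<in> c \<longrightarrow>
          (\<exists>c' \<in> T. {D} \<union> {cneg E | E. cneg (CEx r E) \<in> c} \<subseteq> c'))
     \<and> (\<forall>c \<in> T. \<forall>C. cneg C \<in> c \<longrightarrow> Atom (TopAx C) \<notin> f)
     \<and> (\<forall>C. FNeg (Atom (TopAx C)) \<in> f \<longrightarrow> (\<exists>c \<in> T. C \<notin> c))
     \<and> T \<noteq> {}"

definition ftypes :: "('c,'r,'i) formula \<Rightarrow> ('c,'r,'i) formula set set" where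
  "ftypes \<phi> = {f. \<exists>T ov. quasimodel \<phi> T ov f}"

definition ctype_of :: "('c,'r,'i) formula \<Rightarrow> ('c,'r,'i,'d,'x) interp_scheme \<Rightarrow> 'd \<Rightarrow> ('c,'r) concept set" where
  "ctype_of \<phi> I x = {C \<in> con \<phi>. x \<in> cext I C}"

definition qm_T :: "('c,'r,'i) formula \<Rightarrow> ('c,'r,'i,'d,'x) interp_scheme \<Rightarrow> ('c,'r) concept set set" where
  "qm_T \<phi> I = ctype_of \<phi> I ` dom I"

definition qm_o :: "('c,'r,'i) formula \<Rightarrow> ('c,'r,'i,'d,'x) interp_scheme \<Rightarrow> 'i \<Rightarrow> ('c,'r) concept set" where
  "qm_o \<phi> I a = ctype_of \<phi> I (iI I a)"

definition qm_f :: "('c,'r,'i) formula \<Rightarrow> ('c,'r,'i,'d,'x) interp_scheme \<Rightarrow> ('c,'r,'i) formula set" where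
  "qm_f \<phi> I = {\<psi> \<in> Sub \<phi>. fsat I \<psi>}"

definition is_literal :: "('c,'r,'i) formula \<Rightarrow> bool" where
  "is_literal \<psi> \<longleftrightarrow> (\<exists>\<alpha>. \<psi> = Atom \<alpha> \<or> \<psi> = FNeg (Atom \<alpha>))"

definition lit :: "('c,'r,'i) formula set \<Rightarrow> ('c,'r,'i) formula set" where
  "lit f = {\<psi> \<in> f. is_literal \<psi>}"

definition qfilter :: "('c,'r,'i) formula \<Rightarrow> ('c,'r,'i,'d,'x) interp_scheme \<Rightarrow> ('c,'r,'i) formula set set" where
  "qfilter \<phi> M = ftypes \<phi> - {qm_f \<phi> M}"

definition contraction :: "('c,'r,'i) formula \<Rightarrow> ('c,'r,'i,'d,'x) interp_scheme \<Rightarrow> ('c,'r,'i) formula" where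
  "contraction \<phi> M =
     (if fsat M \<phi> then
        (if qfilter \<phi> M \<noteq> {} then bigOr ((\<lambda>f. bigAnd (lit f)) ` qfilter \<phi> M) else fbot)
      else \<phi>)"

definition contraction_s :: "('c,'r,'i) formula \<Rightarrow> ('c,'r,'i,'d,'x) interp_scheme \<Rightarrow> ('c,'r,'i) formula" where
  "contraction_s \<phi> M =
     (if fsat M \<phi> then FAnd \<phi> (FNeg (bigAnd (lit (qm_f \<phi> M)))) else \<phi>)"

end

theory Submission
  imports Defs
begin

lemma fsat_fneg[simp]: "fsat I (fneg \<psi>) \<longleftrightarrow> \<not> fsat I \<psi>"
  by (cases \<psi>) (auto simp: fneg_def)

lemma fsat_fnorm[simp]: "fsat I (fnorm \<psi>) \<longleftrightarrow> fsat I \<psi>"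
  by (induction \<psi>) auto

lemma fsat_fbot[simp]: "\<not> fsat I fbot"
  by (simp add: fbot_def)

lemma fsat_ftop[simp]: "fsat I ftop"
  by (simp add: ftop_def)

lemma fsat_bigAnd_list: "fsat I (bigAnd_list xs) \<longleftrightarrow> (\<forall>x\<in>set xs. fsat I x)"
  by (induction xs rule: bigAnd_list.induct) auto

lemma fsat_bigOr_list: "fsat I (bigOr_list xs) \<longleftrightarrow> (\<exists>x\<in>set xs. fsat I x)"
  by (induction xs rule: bigOr_list.induct) (auto simp: FOr_def)

lemma some_list: "finite S \<Longrightarrow> set (SOME xs. set xs = S \<and> distinct xs) = S"
  by (metis (mono_tags, lifting) finite_distinct_list someI_ex)

lemma fsat_bigAnd: "finite S \<Longrightarrow> fsat I (bigAnd S) \<longleftrightarrow> (\<forall>x\<in>S. fsat I x)"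
  unfolding bigAnd_def by (simp add: fsat_bigAnd_list some_list)

lemma fsat_bigOr: "finite S \<Longrightarrow> fsat I (bigOr S) \<longleftrightarrow> (\<exists>x\<in>S. fsat I x)"
  unfolding bigOr_def by (simp add: fsat_bigOr_list some_list)

lemma finite_Sub: "finite (Sub \<phi>)"
  by (induction \<phi>) auto

lemma Sub_fneg: "\<psi> \<in> Sub \<phi> \<Longrightarrow> fneg \<psi> \<in> Sub \<phi>"
proof (induction \<phi>)
  case (Atom x)
  then show ?case by (auto simp: fneg_def)
next
  case (FNeg \<phi>)
  then show ?case by simp
next
  case (FAnd \<phi>1 \<phi>2)
  then show ?case by (auto simp: fneg_def)
qed

lemma fnorm_Sub: "fnorm \<psi> \<in> Sub \<psi>"
  by (induction \<psi>) (auto intro: Sub_fneg)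

lemma Sub_FAnd: "FAnd \<psi> \<chi> \<in> Sub \<phi> \<Longrightarrow> \<psi> \<in> Sub \<phi> \<and> \<chi> \<in> Sub \<phi>"
proof (induction \<phi>)
  case (Atom x)
  then show ?case by auto
next
  case (FNeg \<phi>)
  then show ?case by simp
next
  case (FAnd \<phi>1 \<phi>2)
  then show ?case using fnorm_Sub[of \<phi>1] fnorm_Sub[of \<phi>2] by (auto simp: fneg_def)
qed

lemma qm_f_type: "formula_type \<phi> (qm_f \<phi> I)"
  unfolding formula_type_def
proof (intro conjI allI impI ballI)
  show "qm_f \<phi> I \<subseteq> Sub \<phi>" by (auto simp: qm_f_def)
  show "\<psi> \<in> qm_f \<phi> I \<longleftrightarrow> fneg \<psi> \<notin> qm_f \<phi> I" if "\<psi> \<in> Sub \<phi>" for \<psi>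
    using that Sub_fneg[OF that] by (simp add: qm_f_def)
  show "FAnd \<psi> \<chi> \<in> qm_f \<phi> I \<longleftrightarrow> \<psi> \<in> qm_f \<phi> I \<and> \<chi> \<in> qm_f \<phi> I"
    if "FAnd \<psi> \<chi> \<in> Sub \<phi>" for \<psi> \<chi>
    using that Sub_FAnd[OF that] by (simp add: qm_f_def)
qed

lemma lit_determines:
  assumes ft: "formula_type \<phi> f" and sat: "\<forall>\<psi>\<in>lit f. fsat I \<psi>"
  shows "f = qm_f \<phi> I"
proof -
  have key: "\<psi> \<in> Sub \<phi> \<longrightarrow> (\<psi> \<in> f \<longleftrightarrow> fsat I \<psi>)" for \<psi>
  proof (induction \<psi>)
    case (Atom x)
    show ?case
    proof
      assume a: "Atom x \<in> Sub \<phi>"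
      have "Atom x \<in> f \<longleftrightarrow> fneg (Atom x) \<notin> f"
        using ft a unfolding formula_type_def by blast
      then have "Atom x \<in> f \<longleftrightarrow> FNeg (Atom x) \<notin> f" by (simp add: fneg_def)
      moreover have "Atom x \<in> f \<Longrightarrow> fsat I (Atom x)" using sat by (auto simp: lit_def is_literal_def)
      moreover have "FNeg (Atom x) \<in> f \<Longrightarrow> fsat I (FNeg (Atom x))" using sat by (auto simp: lit_def is_literal_def)
      ultimately show "Atom x \<in> f \<longleftrightarrow> fsat I (Atom x)" by auto
    qed
  next
    case (FNeg \<chi>)
    show ?case
    proof
      assume a: "FNeg \<chi> \<in> Sub \<phi>"
      then have b: "\<chi> \<in> Sub \<phi>" using Sub_fneg[OF a] by (simp add: fneg_def)
      have "FNeg \<chi> \<in> f \<longleftrightarrow> fneg (FNeg \<chi>) \<notin> f"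
        using ft a unfolding formula_type_def by blast
      then have "FNeg \<chi> \<in> f \<longleftrightarrow> \<chi> \<notin> f" by (simp add: fneg_def)
      then show "FNeg \<chi> \<in> f \<longleftrightarrow> fsat I (FNeg \<chi>)" using FNeg b by auto
    qed
  next
    case (FAnd \<chi>1 \<chi>2)
    show ?case
    proof
      assume a: "FAnd \<chi>1 \<chi>2 \<in> Sub \<phi>"
      then have b: "\<chi>1 \<in> Sub \<phi>" "\<chi>2 \<in> Sub \<phi>" using Sub_FAnd by blast+
      have "FAnd \<chi>1 \<chi>2 \<in> f \<longleftrightarrow> \<chi>1 \<in> f \<and> \<chi>2 \<in> f"
        using ft a unfolding formula_type_def by blast
      then show "FAnd \<chi>1 \<chi>2 \<in> f \<longleftrightarrow> fsat I (FAnd \<chi>1 \<chi>2)" using FAnd b by auto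
    qed
  qed
  have sub: "f \<subseteq> Sub \<phi>" using ft unfolding formula_type_def by blast
  show ?thesis
  proof (rule set_eqI)
    fix \<psi> show "\<psi> \<in> f \<longleftrightarrow> \<psi> \<in> qm_f \<phi> I"
      using key[of \<psi>] sub unfolding qm_f_def by blast
  qed
qed

lemma lit_sat_iff:
  assumes ft: "formula_type \<phi> f"
  shows "fsat I (bigAnd (lit f)) \<longleftrightarrow> f = qm_f \<phi> I"
proof -
  have "finite (lit f)"
  proof (rule finite_subset[OF _ finite_Sub[of \<phi>]])
    show "lit f \<subseteq> Sub \<phi>" using ft unfolding formula_type_def lit_def by blast
  qed
  moreover have "f = qm_f \<phi> I \<Longrightarrow> \<forall>\<psi>\<in>lit f. fsat I \<psi>"
    by (auto simp: lit_def qm_f_def)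
  ultimately show ?thesis using lit_determines[OF ft, of I] fsat_bigAnd[of "lit f" I] by blast
qed

lemma cext_dom: "is_interp I \<Longrightarrow> cext I C \<subseteq> dom I"
proof (induction C)
  case (CName x)
  then show ?case unfolding is_interp_def by simp
qed auto

lemma cext_cneg: "is_interp I \<Longrightarrow> cext I (cneg C) = dom I - cext I C"
proof (cases C)
  case (CNeg D)
  assume I: "is_interp I"
  then have "cext I D \<subseteq> dom I" by (rule cext_dom)
  then show ?thesis using CNeg by (auto simp: cneg_def)
qed (simp_all add: cneg_def)

lemma con_cneg_ex: "cneg (CEx r E) \<in> con \<phi> \<Longrightarrow> cneg E \<in> con \<phi>"
proof -
  assume "cneg (CEx r E) \<in> con \<phi>"
  then have "CNeg (CEx r E) \<in> con \<phi>" by (simp add: cneg_def)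
  then have "CEx r E \<in> con \<phi>" by (rule con.con_negsub)
  then have "E \<in> con \<phi>" by (rule con.con_ex)
  then show ?thesis by (rule con.con_neg)
qed

lemma qm_quasimodel:
  assumes I: "is_interp I" and sat: "fsat I \<phi>"
  shows "quasimodel \<phi> (qm_T \<phi> I) (qm_o \<phi> I) (qm_f \<phi> I)"
proof -
  have ct: "concept_type \<phi> (ctype_of \<phi> I x)" if "x \<in> dom I" for x
    unfolding concept_type_def
  proof (intro conjI allI impI ballI)
    show "ctype_of \<phi> I x \<subseteq> con \<phi>" by (auto simp: ctype_of_def)
    show "D \<in> ctype_of \<phi> I x \<longleftrightarrow> cneg D \<notin> ctype_of \<phi> I x" if D: "D \<in> con \<phi>" for D
    proof -
      have "cneg D \<in> con \<phi>" using D by (rule con.con_neg)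
      moreover have "x \<in> cext I (cneg D) \<longleftrightarrow> x \<notin> cext I D"
        using cext_cneg[OF I, of D] \<open>x \<in> dom I\<close> by blast
      ultimately show ?thesis using D unfolding ctype_of_def by blast
    qed
    show "CAnd D E \<in> ctype_of \<phi> I x \<longleftrightarrow> D \<in> ctype_of \<phi> I x \<and> E \<in> ctype_of \<phi> I x"
      if DE: "CAnd D E \<in> con \<phi>" for D E
    proof -
      have "D \<in> con \<phi>" using DE by (rule con.con_and1)
      moreover have "E \<in> con \<phi>" using DE by (rule con.con_and2)
      ultimately show ?thesis using DE unfolding ctype_of_def by simp
    qed
  qed
  have mc: "model_candidate \<phi> (qm_T \<phi> I) (qm_o \<phi> I) (qm_f \<phi> I)"
    unfolding model_candidate_def
  proof (intro conjI allI impI ballI)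
    show "c \<in> qm_T \<phi> I \<Longrightarrow> concept_type \<phi> c" for c using ct by (auto simp: qm_T_def)
    show "a \<in> ind \<phi> \<Longrightarrow> qm_o \<phi> I a \<in> qm_T \<phi> I" for a
      using I by (auto simp: qm_T_def qm_o_def is_interp_def)
    show "formula_type \<phi> (qm_f \<phi> I)" by (rule qm_f_type)
    show "fnorm \<phi> \<in> qm_f \<phi> I" using sat fnorm_Sub by (auto simp: qm_f_def)
    show "C \<in> qm_o \<phi> I a" if "Atom (CAss C a) \<in> qm_f \<phi> I" for C a
      using that by (auto simp: qm_f_def qm_o_def ctype_of_def intro: con.con_ass)
    show "{cneg C | C. cneg (CEx r C) \<in> qm_o \<phi> I a} \<subseteq> qm_o \<phi> I b"
      if "Atom (RAss r a b) \<in> qm_f \<phi> I" for r a b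
    proof
      fix D assume "D \<in> {cneg C | C. cneg (CEx r C) \<in> qm_o \<phi> I a}"
      then obtain C where D: "D = cneg C" and C: "cneg (CEx r C) \<in> qm_o \<phi> I a" by auto
      have "iI I a \<in> cext I (cneg (CEx r C))" using C by (auto simp: qm_o_def ctype_of_def)
      moreover have "(iI I a, iI I b) \<in> rI I r" using that by (auto simp: qm_f_def)
      ultimately have "iI I b \<in> cext I (cneg C)" using I cext_cneg[OF I]
        by (auto simp: is_interp_def)
      moreover have "cneg C \<in> con \<phi>" using C con_cneg_ex by (auto simp: qm_o_def ctype_of_def)
      ultimately show "D \<in> qm_o \<phi> I b" using D by (auto simp: qm_o_def ctype_of_def)
    qed
  qed
  have ex: "\<exists>c' \<in> qm_T \<phi> I. {D} \<union> {cneg E | E. cneg (CEx r E) \<in> c} \<subseteq> c'"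
    if c: "c \<in> qm_T \<phi> I" and cd: "CEx r D \<in> c" for c r D
  proof -
    obtain x where x: "x \<in> dom I" and cx: "c = ctype_of \<phi> I x" using c by (auto simp: qm_T_def)
    have "x \<in> cext I (CEx r D)" using cd cx by (auto simp: ctype_of_def)
    then obtain y where xy: "(x, y) \<in> rI I r" and y: "y \<in> cext I D" by auto
    have ydom: "y \<in> dom I" using xy I by (auto simp: is_interp_def)
    have Dc: "D \<in> con \<phi>" using cd cx con.con_ex by (auto simp: ctype_of_def)
    have "{D} \<union> {cneg E | E. cneg (CEx r E) \<in> c} \<subseteq> ctype_of \<phi> I y"
    proof
      fix F assume "F \<in> {D} \<union> {cneg E | E. cneg (CEx r E) \<in> c}"
      then show "F \<in> ctype_of \<phi> I y"
      proof
        assume "F \<in> {D}" then show ?thesis using Dc y by (auto simp: ctype_of_def)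
      next
        assume "F \<in> {cneg E | E. cneg (CEx r E) \<in> c}"
        then obtain E where F: "F = cneg E" and E: "cneg (CEx r E) \<in> c" by auto
        have "x \<in> cext I (cneg (CEx r E))" using E cx by (auto simp: ctype_of_def)
        then have "y \<in> cext I (cneg E)" using cext_cneg[OF I] xy ydom by auto
        moreover have "cneg E \<in> con \<phi>" using E cx con_cneg_ex by (auto simp: ctype_of_def)
        ultimately show ?thesis using F by (auto simp: ctype_of_def)
      qed
    qed
    then show ?thesis using ydom by (auto simp: qm_T_def)
  qed
  have top1: "Atom (TopAx C) \<notin> qm_f \<phi> I" if c: "c \<in> qm_T \<phi> I" and cc: "cneg C \<in> c" for c C
  proof -
    obtain x where x: "x \<in> dom I" and cx: "c = ctype_of \<phi> I x" using c by (auto simp: qm_T_def)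
    have "x \<in> cext I (cneg C)" using cc cx by (auto simp: ctype_of_def)
    then have "cext I C \<noteq> dom I" using cext_cneg[OF I] x by auto
    then show ?thesis by (auto simp: qm_f_def)
  qed
  have top2: "\<exists>c \<in> qm_T \<phi> I. C \<notin> c" if "FNeg (Atom (TopAx C)) \<in> qm_f \<phi> I" for C
  proof -
    have "cext I C \<noteq> dom I" using that by (auto simp: qm_f_def)
    then obtain x where "x \<in> dom I" "x \<notin> cext I C" using cext_dom[OF I, of C] by auto
    then show ?thesis by (auto simp: qm_T_def ctype_of_def)
  qed
  have ne: "qm_T \<phi> I \<noteq> {}" using I by (auto simp: qm_T_def is_interp_def)
  show ?thesis unfolding quasimodel_def using mc ex top1 top2 ne by blast
qed

lemma ftypes_iff:
  assumes I: "is_interp I"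
  shows "qm_f \<phi> I \<in> ftypes \<phi> \<longleftrightarrow> fsat I \<phi>"
proof
  assume "qm_f \<phi> I \<in> ftypes \<phi>"
  then have "fnorm \<phi> \<in> qm_f \<phi> I"
    by (auto simp: ftypes_def quasimodel_def model_candidate_def)
  then show "fsat I \<phi>" by (auto simp: qm_f_def)
next
  assume "fsat I \<phi>"
  then show "qm_f \<phi> I \<in> ftypes \<phi>" using qm_quasimodel[OF I] by (auto simp: ftypes_def)
qed

lemma ftypes_formula_type: "f \<in> ftypes \<phi> \<Longrightarrow> formula_type \<phi> f"
  by (auto simp: ftypes_def quasimodel_def model_candidate_def)

lemma finite_ftypes: "finite (ftypes \<phi>)"
proof -
  have "f \<subseteq> Sub \<phi>" if "f \<in> ftypes \<phi>" for f
    using ftypes_formula_type[OF that] unfolding formula_type_def by blast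
  then have "ftypes \<phi> \<subseteq> Pow (Sub \<phi>)" by blast
  then show ?thesis using finite_Sub by (meson finite_Pow_iff finite_subset)
qed

theorem mainTheorem4:
  fixes \<phi> :: "('c,'r,'i) formula" and M :: "('c,'r,'i,'d) interp"
  assumes "is_interp M"
  shows "fequiv (contraction \<phi> M) (contraction_s \<phi> M)"
  unfolding fequiv_def
proof (intro allI impI)
  fix I :: "('c,'r,'i,nat) interp"
  assume I: "is_interp I"
  show "fsat I (contraction \<phi> M) \<longleftrightarrow> fsat I (contraction_s \<phi> M)"
  proof (cases "fsat M \<phi>")
    case False
    then show ?thesis unfolding contraction_def contraction_s_def by simp
  next
    case True
    have fin: "finite (qfilter \<phi> M)" using finite_ftypes by (simp add: qfilter_def)
    have fin2: "finite ((\<lambda>f. bigAnd (lit f)) ` qfilter \<phi> M)" using fin by (rule finite_imageI)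
    have L: "fsat I (contraction \<phi> M) \<longleftrightarrow> (\<exists>f\<in>qfilter \<phi> M. fsat I (bigAnd (lit f)))"
    proof (cases "qfilter \<phi> M = {}")
      case True
      then show ?thesis using \<open>fsat M \<phi>\<close> unfolding contraction_def by simp
    next
      case False
      then have "fsat I (contraction \<phi> M) \<longleftrightarrow> fsat I (bigOr ((\<lambda>f. bigAnd (lit f)) ` qfilter \<phi> M))"
        using \<open>fsat M \<phi>\<close> unfolding contraction_def by simp
      also have "\<dots> \<longleftrightarrow> (\<exists>x\<in>(\<lambda>f. bigAnd (lit f)) ` qfilter \<phi> M. fsat I x)"
        by (rule fsat_bigOr[OF fin2])
      finally show ?thesis by blast
    qed
    also have "\<dots> \<longleftrightarrow> (\<exists>f\<in>qfilter \<phi> M. f = qm_f \<phi> I)"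
    proof -
      have "\<forall>f\<in>qfilter \<phi> M. fsat I (bigAnd (lit f)) \<longleftrightarrow> f = qm_f \<phi> I"
      proof
        fix f assume "f \<in> qfilter \<phi> M"
        then have "formula_type \<phi> f" using ftypes_formula_type unfolding qfilter_def by blast
        then show "fsat I (bigAnd (lit f)) \<longleftrightarrow> f = qm_f \<phi> I" by (rule lit_sat_iff)
      qed
      then show ?thesis by blast
    qed
    also have "\<dots> \<longleftrightarrow> qm_f \<phi> I \<in> qfilter \<phi> M" by blast
    also have "\<dots> \<longleftrightarrow> qm_f \<phi> I \<in> ftypes \<phi> \<and> qm_f \<phi> I \<noteq> qm_f \<phi> M"
      unfolding qfilter_def by blast
    also have "\<dots> \<longleftrightarrow> fsat I \<phi> \<and> \<not> fsat I (bigAnd (lit (qm_f \<phi> M)))"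
      unfolding ftypes_iff[OF I, of \<phi>] lit_sat_iff[OF qm_f_type[of \<phi> M], of I] by blast
    also have "\<dots> \<longleftrightarrow> fsat I (contraction_s \<phi> M)"
      using True unfolding contraction_s_def by simp
    finally show ?thesis .
  qed
qed

end
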